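(* Let $\mathbb D$ be the open unit disc in $\mathbb C$, $\alpha\ge 0$, and $d\mu(z)=(1-|z|^2)^\alpha\,d\lambda(z)$. Then the canonical solution operator $S:A^2(\mathbb D,d\mu)\to L^2(\mathbb D,d\mu)$ to $\overline\partial$ is a Hilbert–Schmidt operator.
   Context: $d\lambda$ is Lebesgue measure; $A^2(\mathbb D,d\mu)$ is the space of holomorphic functions $g$ on $\mathbb D$ with $\int_{\mathbb D}|g|^2d\mu<\infty$. The canonical solution operator $S$ assigns to $g\in A^2(\mathbb D,d\mu)$ the unique $u\in L^2(\mathbb D,d\mu)$ with $\overline\partial u=g$ and $u\perp A^2(\mathbb D,d\mu)$; equivalently $S(g)=\overline z g-P(\overline z g)$ with $P$ the orthogonal projection of $L^2(\mathbb D,d\mu)$ onto $A^2(\mathbb D,d\mu)$. *)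

theory Defs
  imports "HOL-Analysis.Analysis" "HOL-Complex_Analysis.Complex_Analysis"
begin

definition disc :: "complex set" where
  "disc = ball 0 1"

definition wmeasure :: "real \<Rightarrow> complex measure" where
  "wmeasure \<alpha> = density lborel
     (\<lambda>z. ennreal (indicator disc z * (1 - (cmod z)^2) powr \<alpha>))"

definition L2 :: "real \<Rightarrow> (complex \<Rightarrow> complex) \<Rightarrow> bool" where
  "L2 \<alpha> f \<longleftrightarrow> f \<in> borel_measurable (wmeasure \<alpha>) \<and>
      integrable (wmeasure \<alpha>) (\<lambda>z. (cmod (f z))^2)"

definition l2_inner :: "real \<Rightarrow> (complex \<Rightarrow> complex) \<Rightarrow> (complex \<Rightarrow> complex) \<Rightarrow> complex" where
  "l2_inner \<alpha> f g = (LINT z|wmeasure \<alpha>. f z * cnj (g z))"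

definition l2_norm :: "real \<Rightarrow> (complex \<Rightarrow> complex) \<Rightarrow> real" where
  "l2_norm \<alpha> f = sqrt (LINT z|wmeasure \<alpha>. (cmod (f z))^2)"

text \<open>The Bergman space A^2(D, d mu). Convention: functions are normalised to be
  0 outside the disc, so that elements are determined by their values on D.\<close>
definition A2 :: "real \<Rightarrow> (complex \<Rightarrow> complex) set" where
  "A2 \<alpha> = {g. g holomorphic_on disc \<and> (\<forall>z. z \<notin> disc \<longrightarrow> g z = 0) \<and> L2 \<alpha> g}"

definition bergman_proj :: "real \<Rightarrow> (complex \<Rightarrow> complex) \<Rightarrow> (complex \<Rightarrow> complex)" where
  "bergman_proj \<alpha> f = (THE p. p \<in> A2 \<alpha> \<and>
      (\<forall>h\<in>A2 \<alpha>. l2_inner \<alpha> (\<lambda>z. f z - p z) h = 0))"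

definition canonical_solution :: "real \<Rightarrow> (complex \<Rightarrow> complex) \<Rightarrow> (complex \<Rightarrow> complex)" where
  "canonical_solution \<alpha> g =
     (\<lambda>z. cnj z * g z - bergman_proj \<alpha> (\<lambda>w. cnj w * g w) z)"

definition orthonormal_basis_A2 :: "real \<Rightarrow> (nat \<Rightarrow> complex \<Rightarrow> complex) \<Rightarrow> bool" where
  "orthonormal_basis_A2 \<alpha> e \<longleftrightarrow>
     (\<forall>n. e n \<in> A2 \<alpha>) \<and>
     (\<forall>m n. l2_inner \<alpha> (e m) (e n) = (if m = n then 1 else 0)) \<and>
     (\<forall>f\<in>A2 \<alpha>. (\<forall>n. l2_inner \<alpha> f (e n) = 0) \<longrightarrow> (\<forall>z. f z = 0))"

definition hilbert_schmidt_on_A2 :: "real \<Rightarrow> ((complex \<Rightarrow> complex) \<Rightarrow> (complex \<Rightarrow> complex)) \<Rightarrow> bool" where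
  "hilbert_schmidt_on_A2 \<alpha> T \<longleftrightarrow>
     (\<exists>e. orthonormal_basis_A2 \<alpha> e \<and> (\<forall>n. L2 \<alpha> (T (e n))) \<and>
          summable (\<lambda>n. (l2_norm \<alpha> (T (e n)))^2))"

end

theory Submission
  imports Defs
begin

lemma complex_box_preimage:
  "(\<lambda>p. Complex (fst p) (snd p)) -` box l u = box (Re l, Im l) (Re u, Im u)"
  by (auto simp: box_def Basis_complex_def Basis_prod_def inner_prod_def)

lemma lborel_complex: "distr lborel borel (\<lambda>p::real\<times>real. Complex (fst p) (snd p)) = (lborel :: complex measure)"
proof (rule lborel_eqI[symmetric])
  have meas: "(\<lambda>p::real\<times>real. Complex (fst p) (snd p)) \<in> borel_measurable lborel"
  proof -
    have "(\<lambda>p::real\<times>real. Complex (fst p) (snd p)) = (\<lambda>p. complex_of_real (fst p) + \<i> * complex_of_real (snd p))"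
      by (auto simp: complex_eq_iff)
    moreover have "(\<lambda>p::real\<times>real. complex_of_real (fst p) + \<i> * complex_of_real (snd p)) \<in> borel_measurable lborel"
      unfolding measurable_lborel2 by (intro borel_measurable_continuous_onI continuous_intros)
    ultimately show ?thesis by simp
  qed
  fix l u :: complex assume le: "\<And>b. b \<in> Basis \<Longrightarrow> l \<bullet> b \<le> u \<bullet> b"
  have "Re l \<le> Re u" "Im l \<le> Im u" using le[of 1] le[of \<i>] by (auto simp: Basis_complex_def)
  show "emeasure (distr lborel borel (\<lambda>p::real\<times>real. Complex (fst p) (snd p))) (box l u) = ennreal (\<Prod>b\<in>Basis. (u - l) \<bullet> b)"
    using le \<open>Re l \<le> Re u\<close> \<open>Im l \<le> Im u\<close>
    apply (subst emeasure_distr[OF meas])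
     apply simp
    by (simp add:  complex_box_preimage emeasure_lborel_box_eq Basis_prod_def Basis_complex_def inner_prod_def
       prod.union_disjoint)
qed simp

lemma nn_integral_shift_real: "f \<in> borel_measurable borel \<Longrightarrow> (\<integral>\<^sup>+x. f (x + t) \<partial>(lborel::real measure)) = (\<integral>\<^sup>+x. f x \<partial>lborel)"
proof -
  assume f: "f \<in> borel_measurable borel"
  have "(\<integral>\<^sup>+x. f x \<partial>(lborel::real measure)) = (\<integral>\<^sup>+x. f x \<partial>(distr lborel borel ((+) t)))"
    by (simp add: lborel_distr_plus)
  also have "\<dots> = (\<integral>\<^sup>+x. f (t + x) \<partial>lborel)"
    using f by (subst nn_integral_distr) auto
  finally show ?thesis by (simp add: add.commute)
qed

lemma shear1: "distr lborel borel (\<lambda>p::real\<times>real. (fst p + a * snd p, snd p)) = lborel"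
proof (rule measure_eqI)
  fix A :: "(real\<times>real) set" assume "A \<in> sets (distr lborel borel (\<lambda>p::real\<times>real. (fst p + a * snd p, snd p)))"
  then have A[measurable]: "A \<in> sets borel" by simp
  have "emeasure (distr lborel borel (\<lambda>p::real\<times>real. (fst p + a * snd p, snd p))) A
      = (\<integral>\<^sup>+p. indicator A p \<partial>(distr lborel borel (\<lambda>p::real\<times>real. (fst p + a * snd p, snd p))))"
    by simp
  also have "\<dots> = (\<integral>\<^sup>+p. indicator A (fst p + a * snd p, snd p) \<partial>lborel)"
    by (subst nn_integral_distr) (auto intro!: borel_measurable_continuous_onI continuous_intros)
  also have "\<dots> = (\<integral>\<^sup>+p. indicator A (fst p + a * snd p, snd p) \<partial>(lborel \<Otimes>\<^sub>M lborel))"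
    by (simp add: lborel_prod)
  also have "\<dots> = (\<integral>\<^sup>+y. \<integral>\<^sup>+x. indicator A (x + a * y, y) \<partial>lborel \<partial>lborel)"
    by (subst lborel_pair.nn_integral_snd[symmetric]) auto
  also have "\<dots> = (\<integral>\<^sup>+y. \<integral>\<^sup>+x. indicator A (x, y) \<partial>lborel \<partial>lborel)"
    by (intro nn_integral_cong nn_integral_shift_real[where f="\<lambda>x. indicator A (x, _)"]) auto
  also have "\<dots> = (\<integral>\<^sup>+p. indicator A p \<partial>(lborel \<Otimes>\<^sub>M lborel))"
    by (subst lborel_pair.nn_integral_snd[symmetric]) (auto simp: lborel_prod)
  also have "\<dots> = emeasure lborel A"
    by (simp add: lborel_prod)
  finally show "emeasure (distr lborel borel (\<lambda>p::real\<times>real. (fst p + a * snd p, snd p))) A = emeasure lborel A" .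
qed simp

lemma shear2: "distr lborel borel (\<lambda>p::real\<times>real. (fst p, snd p + b * fst p)) = lborel"
proof (rule measure_eqI)
  fix A :: "(real\<times>real) set" assume "A \<in> sets (distr lborel borel (\<lambda>p::real\<times>real. (fst p, snd p + b * fst p)))"
  then have A[measurable]: "A \<in> sets borel" by simp
  have "emeasure (distr lborel borel (\<lambda>p::real\<times>real. (fst p, snd p + b * fst p))) A
      = (\<integral>\<^sup>+p. indicator A p \<partial>(distr lborel borel (\<lambda>p::real\<times>real. (fst p, snd p + b * fst p))))"
    by simp
  also have "\<dots> = (\<integral>\<^sup>+p. indicator A (fst p, snd p + b * fst p) \<partial>lborel)"
    by (subst nn_integral_distr) (auto intro!: borel_measurable_continuous_onI continuous_intros)
  also have "\<dots> = (\<integral>\<^sup>+p. indicator A (fst p, snd p + b * fst p) \<partial>(lborel \<Otimes>\<^sub>M lborel))"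
    by (simp add: lborel_prod)
  also have "\<dots> = (\<integral>\<^sup>+x. \<integral>\<^sup>+y. indicator A (x, y + b * x) \<partial>lborel \<partial>lborel)"
    by (subst lborel.nn_integral_fst[symmetric]) auto
  also have "\<dots> = (\<integral>\<^sup>+x. \<integral>\<^sup>+y. indicator A (x, y) \<partial>lborel \<partial>lborel)"
    by (intro nn_integral_cong nn_integral_shift_real[where f="\<lambda>y. indicator A (_, y)"]) auto
  also have "\<dots> = (\<integral>\<^sup>+p. indicator A p \<partial>(lborel \<Otimes>\<^sub>M lborel))"
    by (subst lborel.nn_integral_fst[symmetric]) (auto simp: lborel_prod)
  also have "\<dots> = emeasure lborel A"
    by (simp add: lborel_prod)
  finally show "emeasure (distr lborel borel (\<lambda>p::real\<times>real. (fst p, snd p + b * fst p))) A = emeasure lborel A" .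
qed simp

definition rot2 :: "complex \<Rightarrow> real\<times>real \<Rightarrow> real\<times>real" where
  "rot2 c p = (Re c * fst p - Im c * snd p, Im c * fst p + Re c * snd p)"

lemma rot2_shears:
  assumes "cmod c = 1" "c \<noteq> -1"
  shows "rot2 c = (\<lambda>p::real\<times>real. (fst p + (- Im c / (1 + Re c)) * snd p, snd p)) \<circ>
                  (\<lambda>p::real\<times>real. (fst p, snd p + Im c * fst p)) \<circ>
                  (\<lambda>p::real\<times>real. (fst p + (- Im c / (1 + Re c)) * snd p, snd p))"
proof -
  have n: "(Re c)^2 + (Im c)^2 = 1" using assms(1) by (simp add: cmod_def)
  have "1 + Re c \<noteq> 0"
  proof
    assume "1 + Re c = 0" then have "Re c = -1" by simp
    with n have "Im c = 0" by simp
    with \<open>Re c = -1\<close> assms(2) show False by (simp add: complex_eq_iff)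
  qed
  show ?thesis
  proof
    fix p :: "real\<times>real"
    obtain x y where p: "p = (x, y)" by (cases p)
    define a where "a = - Im c / (1 + Re c)"
    have h2: "a * (1 + Re c) = - Im c" using \<open>1 + Re c \<noteq> 0\<close> by (simp add: a_def)
    have "a * Im c * (1 + Re c) = Im c * (a * (1 + Re c))" by (simp add: algebra_simps)
    also have "\<dots> = - (Im c * Im c)" using h2 by simp
    also have "\<dots> = (Re c - 1) * (1 + Re c)" using n by (simp add: algebra_simps power2_eq_square)
    finally have "a * Im c * (1 + Re c) = (Re c - 1) * (1 + Re c)" .
    then have h1: "a * Im c = Re c - 1" using \<open>1 + Re c \<noteq> 0\<close> by simp
    have "x + a * y + a * (y + Im c * (x + a * y)) = x * (1 + a * Im c) + y * (a * (1 + (1 + a * Im c)))"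
      by (simp add: algebra_simps)
    also have "\<dots> = Re c * x - Im c * y" using h1 h2 by (simp add: algebra_simps)
    finally have e1: "Re c * x - Im c * y = x + a * y + a * (y + Im c * (x + a * y))" by simp
    have "y + Im c * (x + a * y) = Im c * x + y * (1 + a * Im c)" by (simp add: algebra_simps)
    also have "\<dots> = Im c * x + Re c * y" using h1 by simp
    finally have e2: "Im c * x + Re c * y = y + Im c * (x + a * y)" by simp
    show "rot2 c p = ((\<lambda>p::real\<times>real. (fst p + (- Im c / (1 + Re c)) * snd p, snd p)) \<circ>
                  (\<lambda>p::real\<times>real. (fst p, snd p + Im c * fst p)) \<circ>
                  (\<lambda>p::real\<times>real. (fst p + (- Im c / (1 + Re c)) * snd p, snd p))) p"
      using e1 e2 by (simp add: rot2_def p a_def)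
  qed
qed

lemma meas_shear1[measurable]: "(\<lambda>p::real\<times>real. (fst p + a * snd p, snd p)) \<in> borel_measurable borel"
  by (intro borel_measurable_continuous_onI continuous_intros)
lemma meas_shear2[measurable]: "(\<lambda>p::real\<times>real. (fst p, snd p + a * fst p)) \<in> borel_measurable borel"
  by (intro borel_measurable_continuous_onI continuous_intros)

lemma distr_rot2_aux:
  assumes "cmod c = 1" "c \<noteq> -1"
  shows "distr lborel borel (rot2 c) = lborel"
proof -
  let ?a = "- Im c / (1 + Re c)"
  let ?S1 = "(\<lambda>p::real\<times>real. (fst p + ?a * snd p, snd p))"
  let ?S2 = "(\<lambda>p::real\<times>real. (fst p, snd p + Im c * fst p))"
  have "distr lborel borel (rot2 c) = distr lborel borel (?S1 \<circ> ?S2 \<circ> ?S1)"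
    by (simp add: rot2_shears[OF assms])
  also have "\<dots> = distr (distr (distr lborel borel ?S1) borel ?S2) borel ?S1"
  proof -
    have m1: "?S1 \<in> lborel \<rightarrow>\<^sub>M borel" "?S1 \<in> borel \<rightarrow>\<^sub>M borel" "?S2 \<in> borel \<rightarrow>\<^sub>M borel" using meas_shear1[of ?a] meas_shear2[of "Im c"] by auto
    have "distr (distr (distr lborel borel ?S1) borel ?S2) borel ?S1 = distr (distr lborel borel (?S2 \<circ> ?S1)) borel ?S1"
      using distr_distr[OF m1(3) m1(1)] by simp
    also have "\<dots> = distr lborel borel (?S1 \<circ> (?S2 \<circ> ?S1))"
    proof -
      have m2: "?S2 \<circ> ?S1 \<in> lborel \<rightarrow>\<^sub>M borel" using m1 by (simp add: measurable_comp)
      show ?thesis using distr_distr[OF m1(2) m2] by simp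
    qed
    finally show ?thesis by (simp add: comp_assoc)
  qed
  also have "\<dots> = lborel" by (simp only: shear1 shear2)
  finally show ?thesis .
qed

lemma complex_rot2: "Complex (fst (rot2 c p)) (snd (rot2 c p)) = c * Complex (fst p) (snd p)"
  by (simp add: rot2_def complex_eq_iff)

lemma meas_Complex[measurable]: "(\<lambda>p::real\<times>real. Complex (fst p) (snd p)) \<in> borel_measurable borel"
proof -
  have "(\<lambda>p::real\<times>real. Complex (fst p) (snd p)) = (\<lambda>p. complex_of_real (fst p) + \<i> * complex_of_real (snd p))"
    by (auto simp: complex_eq_iff)
  then show ?thesis by (simp add: borel_measurable_continuous_onI continuous_intros)
qed

lemma meas_rot2[measurable]: "rot2 c \<in> borel_measurable borel"
  unfolding rot2_def by (intro borel_measurable_continuous_onI continuous_intros)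

lemma distr_rot_aux:
  assumes "cmod c = 1" "c \<noteq> -1"
  shows "distr lborel borel ((*) c) = (lborel :: complex measure)"
proof -
  let ?C = "\<lambda>p::real\<times>real. Complex (fst p) (snd p)"
  have "distr lborel borel ((*) c) = distr (distr lborel borel ?C) borel ((*) c)"
    by (simp add: lborel_complex)
  also have "\<dots> = distr lborel borel (((*) c) \<circ> ?C)"
    by (subst distr_distr) auto
  also have "((*) c) \<circ> ?C = ?C \<circ> rot2 c"
    by (auto simp: complex_rot2)
  also have "distr lborel borel (?C \<circ> rot2 c) = distr (distr lborel borel (rot2 c)) borel ?C"
    by (subst distr_distr) auto
  also have "\<dots> = lborel"
    by (simp add: distr_rot2_aux[OF assms] lborel_complex)
  finally show ?thesis .
qed

lemma distr_rot:
  assumes "cmod c = 1"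
  shows "distr lborel borel ((*) c) = (lborel :: complex measure)"
proof (cases "c = -1")
  case False then show ?thesis using distr_rot_aux assms by blast
next
  case True
  have "(*) c = ((*) \<i> \<circ> (*) \<i>)" using True by (auto simp: fun_eq_iff)
  then have "distr lborel borel ((*) c) = distr lborel borel ((*) \<i> \<circ> (*) \<i>)"
    by simp
  also have "\<dots> = distr (distr lborel borel ((*) \<i>)) borel ((*) \<i>)"
    by (subst distr_distr) auto
  also have "\<dots> = lborel"
    using distr_rot_aux[of \<i>] by (simp add: complex_eq_iff)
  finally show ?thesis .
qed

definition om :: "real \<Rightarrow> complex" where "om t = exp (2 * of_real pi * \<i> * of_real t)"

lemma norm_om[simp]: "cmod (om t) = 1"
  unfolding om_def by (simp add: norm_exp_eq_Re)

lemma om_add: "om (s + t) = om s * om t"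
  unfolding om_def by (simp add: exp_add[symmetric] algebra_simps)

lemma om_minus1: "om (x - 1) = om x"
proof -
  have "om (x - 1) = exp (2 * of_real pi * \<i> * of_real x - 2 * of_real pi * \<i>)"
    unfolding om_def by (simp add: algebra_simps)
  also have "\<dots> = om x" unfolding om_def by (simp add: exp_diff)
  finally show ?thesis .
qed

lemma cnj_om: "cnj (om t) = inverse (om t)"
proof -
  have "cnj (om t) = exp (- (2 * of_real pi * \<i> * of_real t))"
    unfolding om_def exp_cnj by simp
  then show ?thesis by (simp add: exp_minus om_def)
qed

lemma circle_avg:
  assumes h: "h holomorphic_on ball 0 1" and z: "z \<in> ball 0 1" "z \<noteq> 0"
  shows "((\<lambda>t. cnj (om t) ^ k * h (om t * z)) has_integral ((deriv ^^ k) h 0 / fact k * z ^ k)) {0..1}"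
proof -
  define r where "r = cmod z"
  have r: "0 < r" "r < 1" using z by (auto simp: r_def)
  define s where "s = Arg2pi z / (2 * pi)"
  have s: "0 \<le> s" "s \<le> 1" using Arg2pi[of z] by (auto simp: s_def)
  have zs: "z = of_real r * om s"
  proof -
    have "z = of_real r * exp (\<i> * of_real (Arg2pi z))" using Arg2pi[of z] by (simp add: is_Arg_def r_def)
    also have "\<i> * of_real (Arg2pi z) = 2 * of_real pi * \<i> * of_real s" by (simp add: s_def)
    finally show ?thesis by (simp add: om_def)
  qed
  have shift: "shiftpath s (circlepath 0 r) = (\<lambda>t. z * om t)"
  proof
    fix t
    have "circlepath 0 r x = of_real r * om x" for x by (simp add: circlepath om_def)
    then show "shiftpath s (circlepath 0 r) t = z * om t"
      by (simp add: shiftpath_def zs om_add om_minus1 diff_add_eq[symmetric])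
  qed
  have CI: "((\<lambda>u. h u / (u - 0) ^ (Suc k)) has_contour_integral ((2 * pi * \<i>) / (fact k) * (deriv ^^ k) h 0)) (circlepath 0 r)"
  proof (rule Cauchy_has_contour_integral_higher_derivative_circlepath)
    show "continuous_on (cball 0 r) h"
      by (rule continuous_on_subset[OF holomorphic_on_imp_continuous_on[OF h]]) (use r in auto)
    show "h holomorphic_on ball 0 r" by (rule holomorphic_on_subset[OF h]) (use r in auto)
    show "0 \<in> ball (0::complex) r" using r by simp
  qed
  have "((\<lambda>u. h u / (u - 0) ^ (Suc k)) has_contour_integral ((2 * pi * \<i>) / (fact k) * (deriv ^^ k) h 0)) (\<lambda>t. z * om t)"
  proof -
    have "s \<in> {0..1}" using s by auto
    from has_contour_integral_shiftpath[OF CI valid_path_circlepath this]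
    show ?thesis unfolding shift .
  qed
  then have I: "((\<lambda>t. h (z * om t) / (z * om t) ^ (Suc k) * vector_derivative (\<lambda>t. z * om t) (at t)) has_integral ((2 * pi * \<i>) / (fact k) * (deriv ^^ k) h 0)) {0..1}"
    by (simp add: has_contour_integral)
  have vd: "vector_derivative (\<lambda>t. z * om t) (at t) = z * om t * (2 * of_real pi * \<i>)" for t
  proof (rule vector_derivative_at)
    have "((\<lambda>w. z * exp (2 * of_real pi * \<i> * w)) has_field_derivative z * exp (2 * of_real pi * \<i> * of_real t) * (2 * of_real pi * \<i>)) (at (of_real t))"
      by (auto intro!: derivative_eq_intros)
    from has_vector_derivative_real_field[OF this]
    show "((\<lambda>t. z * om t) has_vector_derivative z * om t * (2 * of_real pi * \<i>)) (at t)"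
      by (simp add: om_def)
  qed
  have eq: "h (z * om t) / (z * om t) ^ (Suc k) * vector_derivative (\<lambda>t. z * om t) (at t)
      = (2 * of_real pi * \<i> / z ^ k) * (cnj (om t) ^ k * h (om t * z))" for t
  proof -
    have "om t \<noteq> 0" using norm_om[of t] by (metis norm_zero zero_neq_one)
    then show ?thesis using z(2) unfolding vd cnj_om
      by (simp add: field_simps power_mult_distrib)
  qed
  have "((\<lambda>t. (2 * of_real pi * \<i> / z ^ k) * (cnj (om t) ^ k * h (om t * z))) has_integral ((2 * pi * \<i>) / (fact k) * (deriv ^^ k) h 0)) {0..1}"
    using I unfolding eq .
  then have "((\<lambda>t. cnj (om t) ^ k * h (om t * z)) has_integral ((2 * pi * \<i>) / (fact k) * (deriv ^^ k) h 0) / (2 * of_real pi * \<i> / z ^ k)) {0..1}"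
    using z(2) by (subst (asm) has_integral_mult_right_iff) auto
  moreover have "((2 * pi * \<i>) / (fact k) * (deriv ^^ k) h 0) / (2 * of_real pi * \<i> / z ^ k) = (deriv ^^ k) h 0 / fact k * z ^ k"
    using z(2) by (simp add: field_simps)
  ultimately show ?thesis by simp
qed

definition W :: "real \<Rightarrow> complex \<Rightarrow> real" where
  "W a z = indicator disc z * (1 - (cmod z)^2) powr a"

lemma wmeasure_W: "wmeasure a = density lborel (\<lambda>z. ennreal (W a z))"
  by (simp add: wmeasure_def W_def)

lemma disc_borel[measurable]: "disc \<in> sets borel"
  by (simp add: disc_def)

lemma W_meas[measurable]: "W a \<in> borel_measurable borel"
  unfolding W_def by measurable

lemma W_nonneg: "0 \<le> W a z"
  by (simp add: W_def)

lemma W_le1: "0 \<le> a \<Longrightarrow> W a z \<le> 1"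
proof -
  assume a: "0 \<le> a"
  show ?thesis
  proof (cases "z \<in> disc")
    case True
    then have "cmod z < 1" by (simp add: disc_def)
    then have "\<bar>1 - (cmod z)^2\<bar> \<le> 1"
      by (smt (verit, ccfv_SIG) norm_ge_zero power_le_one zero_le_power2)
    then show ?thesis using a True by (simp add: W_def powr_le1)
  qed (simp add: W_def)
qed

lemma W_pos: "z \<in> disc \<Longrightarrow> 0 < W a z"
proof -
  assume "z \<in> disc"
  then have "cmod z < 1" by (simp add: disc_def)
  then have "(cmod z)^2 < 1" by (simp add: power_less_one_iff abs_square_less_1)
  then show ?thesis using \<open>z \<in> disc\<close> by (simp add: W_def)
qed

lemma W_out: "z \<notin> disc \<Longrightarrow> W a z = 0"
  by (simp add: W_def)

lemma disc_rot: "cmod c = 1 \<Longrightarrow> (c * z \<in> disc) = (z \<in> disc)"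
  by (simp add: disc_def norm_mult)

lemma W_rot: "cmod c = 1 \<Longrightarrow> W a (c * z) = W a z"
  by (simp add: W_def norm_mult indicator_def disc_rot)

lemma meas_wm[simp]: "f \<in> borel_measurable (wmeasure a) \<longleftrightarrow> f \<in> borel_measurable borel"
  by (simp add: wmeasure_def)

lemma integral_wm:
  fixes f :: "complex \<Rightarrow> 'b::{banach, second_countable_topology}"
  shows "f \<in> borel_measurable borel \<Longrightarrow> integral\<^sup>L (wmeasure a) f = integral\<^sup>L lborel (\<lambda>z. W a z *\<^sub>R f z)"
  unfolding wmeasure_W by (rule integral_density) (auto simp: W_nonneg)

lemma integrable_wm:
  fixes f :: "complex \<Rightarrow> 'b::{banach, second_countable_topology}"
  shows "f \<in> borel_measurable borel \<Longrightarrow> integrable (wmeasure a) f \<longleftrightarrow> integrable lborel (\<lambda>z. W a z *\<^sub>R f z)"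
  unfolding wmeasure_W by (rule integrable_density) (auto simp: W_nonneg)

lemma disc_finite: "emeasure lborel disc < \<infinity>"
  unfolding disc_def by (rule emeasure_lborel_ball_finite)

lemma meas_cnj[measurable]: "f \<in> borel_measurable M \<Longrightarrow> (\<lambda>x. cnj (f x)) \<in> borel_measurable M"
proof -
  assume f: "f \<in> borel_measurable M"
  have "(\<lambda>x::complex. cnj x) \<in> borel_measurable borel" by (intro borel_measurable_continuous_onI continuous_intros)
  from measurable_compose[OF f this] show ?thesis .
qed

lemma integrable_W_bounded:
  fixes f :: "complex \<Rightarrow> 'b::{banach, second_countable_topology}"
  assumes a: "0 \<le> a" and f[measurable]: "f \<in> borel_measurable borel" and B: "\<And>z. z \<in> disc \<Longrightarrow> norm (f z) \<le> B"
  shows "integrable lborel (\<lambda>z. W a z *\<^sub>R f z)"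
proof (rule Bochner_Integration.integrable_bound)
  show "integrable lborel (\<lambda>z. B *\<^sub>R indicator disc z :: real)"
    using disc_finite by (intro integrable_scaleR_right) auto
  show "(\<lambda>z. W a z *\<^sub>R f z) \<in> borel_measurable lborel" by measurable
  show "AE x in lborel. norm (W a x *\<^sub>R f x) \<le> norm (B *\<^sub>R indicator disc x :: real)"
  proof (intro AE_I2)
    fix z show "norm (W a z *\<^sub>R f z) \<le> norm (B *\<^sub>R indicator disc z :: real)"
    proof (cases "z \<in> disc")
      case True
      have "norm (W a z *\<^sub>R f z) = W a z * norm (f z)" by (simp add: W_nonneg)
      also have "\<dots> \<le> 1 * B" using B[OF True] W_le1[OF a] W_nonneg
        by (intro mult_mono) (auto simp: W_nonneg)
      also have "\<dots> \<le> norm (B *\<^sub>R indicator disc z :: real)" using True by simp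
      finally show ?thesis .
    qed (simp add: W_out)
  qed
qed

lemma integral_rot:
  fixes f :: "complex \<Rightarrow> 'b::{banach, second_countable_topology}"
  assumes "cmod c = 1" "f \<in> borel_measurable borel"
  shows "integral\<^sup>L lborel (\<lambda>z. f (c * z)) = integral\<^sup>L lborel f"
proof -
  have "integral\<^sup>L lborel f = integral\<^sup>L (distr lborel borel ((*) c)) f" by (simp add: distr_rot assms)
  also have "\<dots> = integral\<^sup>L lborel (\<lambda>z. f (c * z))" by (rule integral_distr) (auto simp: assms)
  finally show ?thesis ..
qed

lemma integrable_rot:
  fixes f :: "complex \<Rightarrow> 'b::{banach, second_countable_topology}"
  assumes "cmod c = 1" "f \<in> borel_measurable borel"
  shows "integrable lborel (\<lambda>z. f (c * z)) \<longleftrightarrow> integrable lborel f"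
proof -
  have "integrable lborel f = integrable (distr lborel borel ((*) c)) f" by (simp add: distr_rot assms)
  also have "\<dots> = integrable lborel (\<lambda>z. f (c * z))" by (rule integrable_distr_eq) (auto simp: assms)
  finally show ?thesis ..
qed

lemma L2_iff: "L2 a f \<longleftrightarrow> f \<in> borel_measurable borel \<and> integrable lborel (\<lambda>z. W a z * (cmod (f z))^2)"
  unfolding L2_def by (auto simp: integrable_wm)

lemma l2_inner_lb: "f \<in> borel_measurable borel \<Longrightarrow> g \<in> borel_measurable borel \<Longrightarrow>
   l2_inner a f g = integral\<^sup>L lborel (\<lambda>z. W a z *\<^sub>R (f z * cnj (g z)))"
proof -
  assume [measurable]: "f \<in> borel_measurable borel" "g \<in> borel_measurable borel"
  show ?thesis unfolding l2_inner_def by (rule integral_wm) measurable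
qed

lemma l2_norm_lb: "f \<in> borel_measurable borel \<Longrightarrow>
   (l2_norm a f)^2 = integral\<^sup>L lborel (\<lambda>z. W a z * (cmod (f z))^2)"
proof -
  assume [measurable]: "f \<in> borel_measurable borel"
  have "integral\<^sup>L (wmeasure a) (\<lambda>z. (cmod (f z))^2) = integral\<^sup>L lborel (\<lambda>z. W a z * (cmod (f z))^2)"
    by (subst integral_wm) auto
  moreover have "0 \<le> integral\<^sup>L (wmeasure a) (\<lambda>z. (cmod (f z))^2)" by (rule integral_nonneg_AE) auto
  ultimately show ?thesis unfolding l2_norm_def by simp
qed

lemma L2_bounded: "0 \<le> a \<Longrightarrow> f \<in> borel_measurable borel \<Longrightarrow> (\<And>z. z \<in> disc \<Longrightarrow> cmod (f z) \<le> B) \<Longrightarrow> L2 a f"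
proof -
  assume a: "0 \<le> a" and f[measurable]: "f \<in> borel_measurable borel" and B: "\<And>z. z \<in> disc \<Longrightarrow> cmod (f z) \<le> B"
  have "integrable lborel (\<lambda>z. W a z *\<^sub>R (cmod (f z))^2)"
  proof (rule integrable_W_bounded[OF a])
    fix z assume "z \<in> disc"
    then show "norm ((cmod (f z))^2) \<le> B^2" using B by (simp add: power_mono)
  qed measurable
  then show ?thesis by (simp add: L2_iff)
qed

lemma L2_prod_integrable:
  assumes "L2 a f" "L2 a g"
  shows "integrable lborel (\<lambda>z. W a z *\<^sub>R (f z * cnj (g z)))"
proof -
  have [measurable]: "f \<in> borel_measurable borel" "g \<in> borel_measurable borel" using assms by (auto simp: L2_iff)
  have i: "integrable lborel (\<lambda>z. W a z * (cmod (f z))^2 + W a z * (cmod (g z))^2)"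
    using assms by (auto simp: L2_iff)
  show ?thesis
  proof (rule Bochner_Integration.integrable_bound[OF i])
    show "AE x in lborel. norm (W a x *\<^sub>R (f x * cnj (g x))) \<le> norm (W a x * (cmod (f x))^2 + W a x * (cmod (g x))^2)"
    proof (intro AE_I2)
      fix z
      have "cmod (f z) * cmod (g z) \<le> (cmod (f z))^2 + (cmod (g z))^2"
        by (smt (verit, best) norm_ge_zero power2_eq_square mult_mono mult_left_mono sum_squares_bound)
      then have "W a z * (cmod (f z) * cmod (g z)) \<le> W a z * ((cmod (f z))^2 + (cmod (g z))^2)"
        by (intro mult_left_mono) (auto simp: W_nonneg)
      then show "norm (W a z *\<^sub>R (f z * cnj (g z))) \<le> norm (W a z * (cmod (f z))^2 + W a z * (cmod (g z))^2)"
        by (simp add: norm_mult W_nonneg algebra_simps)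
    qed
  qed measurable
qed

lemma L2_diff:
  assumes "L2 a f" "L2 a g"
  shows "L2 a (\<lambda>z. f z - g z)"
proof -
  have [measurable]: "f \<in> borel_measurable borel" "g \<in> borel_measurable borel" using assms by (auto simp: L2_iff)
  have i: "integrable lborel (\<lambda>z. 2 * (W a z * (cmod (f z))^2) + 2 * (W a z * (cmod (g z))^2))"
    using assms by (auto simp: L2_iff)
  have "integrable lborel (\<lambda>z. W a z * (cmod (f z - g z))^2)"
  proof (rule Bochner_Integration.integrable_bound[OF i])
    show "AE x in lborel. norm (W a x * (cmod (f x - g x))^2) \<le> norm (2 * (W a x * (cmod (f x))^2) + 2 * (W a x * (cmod (g x))^2))"
    proof (intro AE_I2)
      fix z
      have "(cmod (f z - g z))^2 \<le> (cmod (f z) + cmod (g z))^2"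
        by (simp add: norm_triangle_ineq4 power_mono)
      also have "\<dots> \<le> 2 * (cmod (f z))^2 + 2 * (cmod (g z))^2"
        by (smt (verit) sum_squares_bound power2_sum)
      finally have "W a z * (cmod (f z - g z))^2 \<le> W a z * (2 * (cmod (f z))^2 + 2 * (cmod (g z))^2)"
        by (intro mult_left_mono) (auto simp: W_nonneg)
      then show "norm (W a z * (cmod (f z - g z))^2) \<le> norm (2 * (W a z * (cmod (f z))^2) + 2 * (W a z * (cmod (g z))^2))"
        by (simp add: W_nonneg algebra_simps)
    qed
  qed measurable
  then show ?thesis by (simp add: L2_iff)
qed

lemma om_meas[measurable]: "om \<in> borel_measurable borel"
  unfolding om_def by (intro borel_measurable_continuous_onI continuous_intros)

lemma om_prod_meas[measurable]: "(\<lambda>p::real\<times>complex. om (fst p) * snd p) \<in> borel_measurable borel"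
  unfolding om_def by (intro borel_measurable_continuous_onI continuous_intros)

lemma cont_om: "continuous_on S om"
  unfolding om_def by (intro continuous_intros)

lemma K:
  fixes \<rho> :: "real \<Rightarrow> real"
  assumes a: "0 \<le> a" and hol: "h holomorphic_on disc" and hm[measurable]: "h \<in> borel_measurable borel"
    and hi: "integrable lborel (\<lambda>z. W a z *\<^sub>R h z)"
    and \<rho>m[measurable]: "\<rho> \<in> borel_measurable borel" and \<rho>B: "\<And>r. 0 \<le> r \<Longrightarrow> r < 1 \<Longrightarrow> \<bar>\<rho> r\<bar> \<le> B"
  shows "integral\<^sup>L lborel (\<lambda>z. of_real (W a z * \<rho> (cmod z)) * cnj z ^ k * h z)
       = (deriv ^^ k) h 0 / fact k * complex_of_real (integral\<^sup>L lborel (\<lambda>z. W a z * \<rho> (cmod z) * (cmod z)^(2*k)))"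
proof -
  define \<Phi> where "\<Phi> z = complex_of_real (W a z * \<rho> (cmod z)) * cnj z ^ k" for z
  define F where "F z = \<Phi> z * h z" for z
  define ak where "ak = (deriv ^^ k) h 0 / fact k"
  have B0: "0 \<le> B" using \<rho>B[of 0] by simp
  have \<Phi>m[measurable]: "\<Phi> \<in> borel_measurable borel" unfolding \<Phi>_def by measurable
  have Fm[measurable]: "F \<in> borel_measurable borel" unfolding F_def by measurable
  have \<Phi>B: "cmod (\<Phi> z) \<le> B" for z
  proof (cases "z \<in> disc")
    case True
    then have z1: "cmod z < 1" by (simp add: disc_def)
    have "cmod (\<Phi> z) = W a z * \<bar>\<rho> (cmod z)\<bar> * cmod z ^ k"
      by (simp add: \<Phi>_def norm_mult norm_power abs_mult W_nonneg)
    also have "\<dots> \<le> 1 * B * 1"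
      using W_le1[OF a, of z] W_nonneg[of a z] \<rho>B[of "cmod z"] z1
      by (intro mult_mono) (auto simp: power_le_one)
    finally show ?thesis by simp
  qed (simp add: \<Phi>_def W_out B0)
  have \<Phi>_rot: "\<Phi> (c * z) = cnj c ^ k * \<Phi> z" if "cmod c = 1" for c z
    using that by (simp add: \<Phi>_def W_rot norm_mult power_mult_distrib)
  have F_int: "integrable lborel F"
  proof (rule Bochner_Integration.integrable_bound)
    show "integrable lborel (\<lambda>z. B *\<^sub>R (W a z *\<^sub>R h z))" using hi by (rule integrable_scaleR_right)
    show "AE z in lborel. norm (F z) \<le> norm (B *\<^sub>R (W a z *\<^sub>R h z))"
    proof (intro AE_I2)
      fix z
      show "norm (F z) \<le> norm (B *\<^sub>R (W a z *\<^sub>R h z))"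
      proof (cases "z \<in> disc")
        case True
        then have z1: "cmod z < 1" by (simp add: disc_def)
        have "norm (F z) = W a z * (\<bar>\<rho> (cmod z)\<bar> * cmod z ^ k) * cmod (h z)"
          by (simp add: F_def \<Phi>_def norm_mult norm_power abs_mult W_nonneg)
        also have "\<dots> \<le> W a z * (B * 1) * cmod (h z)"
          using W_nonneg[of a z] \<rho>B[of "cmod z"] z1
          by (intro mult_right_mono mult_left_mono mult_mono) (auto simp: power_le_one)
        also have "\<dots> = norm (B *\<^sub>R (W a z *\<^sub>R h z))" using B0 by (simp add: W_nonneg)
        finally show ?thesis .
      qed (simp add: F_def \<Phi>_def W_out)
    qed
  qed measurable
  define G where "G t z = indicator {0..1::real} t *\<^sub>R F (om t * z)" for t z
  have Gm: "(\<lambda>p. G (fst p) (snd p)) \<in> borel_measurable (lborel \<Otimes>\<^sub>M lborel)"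
  proof -
    have "(\<lambda>p::real\<times>complex. G (fst p) (snd p)) \<in> borel_measurable borel"
    proof -
      have m1: "(\<lambda>p::real\<times>complex. F (om (fst p) * snd p)) \<in> borel_measurable borel"
        using measurable_compose[OF om_prod_meas Fm] by simp
      have cl: "closed ({0..1::real} \<times> (UNIV::complex set))" by (intro closed_Times) auto
      have m2: "(\<lambda>p::real\<times>complex. indicator ({0..1::real} \<times> UNIV) p :: real) \<in> borel_measurable borel"
        using borel_closed[OF cl] by (intro borel_measurable_indicator) 
      have "(\<lambda>p::real\<times>complex. indicator ({0..1::real} \<times> UNIV) p *\<^sub>R F (om (fst p) * snd p)) \<in> borel_measurable borel"
        using m1 m2 by (intro borel_measurable_scaleR)
      moreover have "(\<lambda>p::real\<times>complex. indicator ({0..1::real} \<times> UNIV) p *\<^sub>R F (om (fst p) * snd p)) = (\<lambda>p. G (fst p) (snd p))"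
        by (auto simp: G_def indicator_def fun_eq_iff)
      ultimately show ?thesis by simp
    qed
    then show ?thesis by (simp add: lborel_prod)
  qed
  have Grot: "integral\<^sup>L lborel (G t) = indicator {0..1::real} t *\<^sub>R integral\<^sup>L lborel F" for t
    unfolding G_def by (simp add: integral_rot)
  have Gint: "integrable lborel (G t)" for t
    unfolding G_def using F_int by (intro integrable_scaleR_right) (simp add: integrable_rot)
  have Gnorm: "integral\<^sup>L lborel (\<lambda>z. norm (G t z)) = indicator {0..1::real} t * integral\<^sup>L lborel (\<lambda>z. norm (F z))" for t
  proof -
    have "integral\<^sup>L lborel (\<lambda>z. norm (G t z)) = integral\<^sup>L lborel (\<lambda>z. indicator {0..1::real} t * norm (F (om t * z)))"
      unfolding G_def by (intro Bochner_Integration.integral_cong) (auto simp: indicator_def)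
    also have "\<dots> = indicator {0..1::real} t * integral\<^sup>L lborel (\<lambda>z. norm (F (om t * z)))" by simp
    also have "integral\<^sup>L lborel (\<lambda>z. norm (F (om t * z))) = integral\<^sup>L lborel (\<lambda>z. norm (F z))"
      by (rule integral_rot[where f="\<lambda>z. norm (F z)"]) auto
    finally show ?thesis .
  qed
  have GI: "integrable (lborel \<Otimes>\<^sub>M lborel) (\<lambda>(t, z). G t z)"
  proof -
    have "integrable (lborel \<Otimes>\<^sub>M lborel) (\<lambda>p. G (fst p) (snd p))"
    proof (rule lborel_pair.Fubini_integrable)
      show "(\<lambda>p. G (fst p) (snd p)) \<in> borel_measurable (lborel \<Otimes>\<^sub>M lborel)" by (rule Gm)
      show "integrable lborel (\<lambda>t. LINT z|lborel. norm (G (fst (t, z)) (snd (t, z))))"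
        unfolding fst_conv snd_conv Gnorm
        by (intro integrable_mult_left) auto
      show "AE t in lborel. integrable lborel (\<lambda>z. G (fst (t, z)) (snd (t, z)))"
        using Gint by simp
    qed
    then show ?thesis by (simp add: case_prod_beta')
  qed
  have "integral\<^sup>L lborel F = (LINT t|lborel. (LINT z|lborel. G t z))"
    by (simp add: Grot)
  also have "\<dots> = (LINT z|lborel. (LINT t|lborel. G t z))"
    using lborel_pair.Fubini_integral[OF GI] by simp
  also have "\<dots> = (LINT z|lborel. \<Phi> z * (ak * z ^ k))"
  proof (rule integral_cong_AE)
    show "(\<lambda>z. LINT t|lborel. G t z) \<in> borel_measurable lborel"
    proof -
      have "(\<lambda>(z, t). G t z) \<in> borel_measurable (lborel \<Otimes>\<^sub>M lborel)"
        using measurable_pair_swap_iff[THEN iffD1, OF Gm[unfolded split_beta'[symmetric]]]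
        by (simp add: split_beta')
      then show ?thesis by (rule lborel.borel_measurable_lebesgue_integral)
    qed
    show "(\<lambda>z. \<Phi> z * (ak * z ^ k)) \<in> borel_measurable lborel" by measurable
    show "AE z in lborel. (LINT t|lborel. G t z) = \<Phi> z * (ak * z ^ k)"
      using AE_lborel_singleton[of 0]
    proof eventually_elim
      fix z :: complex assume z0: "z \<noteq> 0"
      show "(LINT t|lborel. G t z) = \<Phi> z * (ak * z ^ k)"
      proof (cases "z \<in> disc")
        case False
        then have "G t z = 0" for t
          by (simp add: G_def F_def \<Phi>_def W_out disc_rot)
        then show ?thesis using False by (simp add: \<Phi>_def W_out)
      next
        case True
        define g where "g t = cnj (om t) ^ k * h (om t * z)" for t
        have Geq: "G t z = \<Phi> z * (indicator {0..1::real} t *\<^sub>R g t)" for t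
          by (simp add: G_def F_def g_def \<Phi>_rot)
        have "(LINT t|lborel. G t z) = \<Phi> z * (LINT t|lborel. indicator {0..1::real} t *\<^sub>R g t)"
          unfolding Geq by (rule integral_mult_right_zero)
        also have "(LINT t|lborel. indicator {0..1::real} t *\<^sub>R g t) = integral {0..1} g"
        proof -
          have cg: "continuous_on {0..1} g"
          proof -
            have "continuous_on {0..1} (\<lambda>t. om t * z)" by (intro continuous_intros cont_om)
            moreover have "(\<lambda>t. om t * z) ` {0..1} \<subseteq> disc" using True disc_rot[OF norm_om] by auto
            ultimately have "continuous_on {0..1} (\<lambda>t. h (om t * z))"
              by (rule continuous_on_compose2[OF holomorphic_on_imp_continuous_on[OF hol]])
            then show ?thesis unfolding g_def by (intro continuous_intros cont_om)
          qed
          have "set_integrable lborel {0..1} g" by (rule borel_integrable_atLeastAtMost'[OF cg])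
          from set_borel_integral_eq_integral(2)[OF this]
          show ?thesis by (simp add: set_lebesgue_integral_def)
        qed
        also have "integral {0..1} g = ak * z ^ k"
          unfolding g_def ak_def
          by (rule integral_unique, rule circle_avg) (use hol True z0 in \<open>auto simp: disc_def\<close>)
        finally show ?thesis .
      qed
    qed
  qed
  also have "\<dots> = ak * (LINT z|lborel. complex_of_real (W a z * \<rho> (cmod z) * (cmod z)^(2*k)))"
  proof -
    have eqz: "\<Phi> z * (ak * z ^ k) = ak * complex_of_real (W a z * \<rho> (cmod z) * (cmod z)^(2*k))" for z
    proof -
      have "cnj z ^ k * z ^ k = (z * cnj z)^k" by (simp add: power_mult_distrib mult.commute)
      also have "z * cnj z = complex_of_real ((cmod z)^2)" by (rule complex_norm_square[symmetric])
      also have "(complex_of_real ((cmod z)^2))^k = complex_of_real ((cmod z)^(2*k))"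
        by (simp add: power_mult)
      finally have "cnj z ^ k * z ^ k = complex_of_real ((cmod z)^(2*k))" .
      then show ?thesis by (simp add: \<Phi>_def algebra_simps)
    qed
    show ?thesis unfolding eqz by (rule integral_mult_right_zero)
  qed
  finally show ?thesis unfolding F_def \<Phi>_def ak_def by (simp only: integral_complex_of_real)
qed

lemma open_not_null:
  assumes "open U" "z0 \<in> (U::complex set)"
  shows "\<not> (AE z in lborel. z \<notin> U)"
proof
  assume ae: "AE z in lborel. z \<notin> U"
  obtain r where r: "r > 0" "ball z0 r \<subseteq> U" using assms openE by blast
  have "AE z in lborel. z \<notin> ball z0 r" using ae by eventually_elim (use r in auto)
  then have "emeasure lborel (ball z0 r) = 0"
    by (subst (asm) AE_iff_measurable[of "ball z0 r"]) auto
  moreover have "emeasure lborel (ball z0 r) = ennreal (unit_ball_vol (DIM(complex)) * r ^ DIM(complex))"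
    by (rule emeasure_ball) (use r in auto)
  moreover have "unit_ball_vol (DIM(complex)) * r ^ DIM(complex) > 0" using r by simp
  ultimately show False using r unit_ball_vol_pos[of "DIM(complex)"] by auto
qed

lemma open_disc: "open disc" by (simp add: disc_def)

lemma cont_AE_zero:
  fixes d :: "complex \<Rightarrow> complex"
  assumes "continuous_on disc d" "AE z in lborel. z \<in> disc \<longrightarrow> d z = 0" "z \<in> disc"
  shows "d z = 0"
proof (rule ccontr)
  assume "d z \<noteq> 0"
  define U where "U = disc \<inter> d -` (- {0})"
  have "open U" unfolding U_def by (rule continuous_open_preimage[OF assms(1) open_disc]) (metis closed_singleton open_Compl)
  moreover have "z \<in> U" using \<open>d z \<noteq> 0\<close> assms(3) by (simp add: U_def)
  moreover have "AE z in lborel. z \<notin> U" using assms(2) by eventually_elim (auto simp: U_def)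
  ultimately show False using open_not_null by blast
qed

definition M :: "real \<Rightarrow> nat \<Rightarrow> real" where
  "M a n = integral\<^sup>L lborel (\<lambda>z. W a z * (cmod z)^(2*n))"

lemma M_int: "0 \<le> a \<Longrightarrow> integrable lborel (\<lambda>z. W a z * (cmod z)^(2*n))"
  using integrable_W_bounded[of a "\<lambda>z. (cmod z)^(2*n)" 1]
  by (auto simp: disc_def power_le_one)

lemma M_pos: assumes a: "0 \<le> a" shows "0 < M a n"
proof -
  have nn: "0 \<le> M a n" unfolding M_def by (intro integral_nonneg_AE) (auto simp: W_nonneg)
  have "M a n \<noteq> 0"
  proof
    assume "M a n = 0"
    then have "AE z in lborel. W a z * (cmod z)^(2*n) = 0"
      unfolding M_def using M_int[OF a] by (subst (asm) integral_nonneg_eq_0_iff_AE) (auto simp: W_nonneg)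
    then have "AE z in lborel. z \<notin> disc - {0}"
      by eventually_elim (auto dest: W_pos[of _ a])
    moreover have "open (disc - {0})" by (simp add: open_disc open_Diff)
    moreover have "1/2 \<in> disc - {0}" by (simp add: disc_def)
    ultimately show False using open_not_null by blast
  qed
  with nn show ?thesis by simp
qed

lemma M_mono: assumes a: "0 \<le> a" shows "M a (Suc n) \<le> M a n"
  unfolding M_def
proof (rule integral_mono[OF M_int[OF a] M_int[OF a]])
  fix z
  show "W a z * (cmod z)^(2 * Suc n) \<le> W a z * (cmod z)^(2*n)"
  proof (cases "z \<in> disc")
    case True
    then have "cmod z \<le> 1" by (simp add: disc_def)
    then have "(cmod z)^(2 * Suc n) \<le> (cmod z)^(2*n)"
      by (intro power_decreasing) auto
    then show ?thesis by (intro mult_left_mono) (auto simp: W_nonneg)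
  qed (simp add: W_out)
qed

definition e :: "real \<Rightarrow> nat \<Rightarrow> complex \<Rightarrow> complex" where
  "e a n z = (if z \<in> disc then z ^ n / complex_of_real (sqrt (M a n)) else 0)"

lemma e_meas[measurable]: "e a n \<in> borel_measurable borel"
  unfolding e_def by measurable

lemma in_disc_le1: "z \<in> disc \<Longrightarrow> cmod z \<le> 1"
  by (simp add: disc_def)

lemma L2_const: "0 \<le> a \<Longrightarrow> L2 a (\<lambda>z. c)"
  by (rule L2_bounded[of a _ "cmod c"]) auto

lemma L2_L1: assumes "0 \<le> a" "L2 a f" shows "integrable lborel (\<lambda>z. W a z *\<^sub>R f z)"
  using L2_prod_integrable[OF assms(2) L2_const[OF assms(1), of 1]] by simp

lemma e_A2: assumes a: "0 \<le> a" shows "e a n \<in> A2 a"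
proof -
  have "e a n holomorphic_on disc \<longleftrightarrow> (\<lambda>z. z ^ n / complex_of_real (sqrt (M a n))) holomorphic_on disc"
    by (rule holomorphic_cong) (auto simp: e_def)
  moreover have "(\<lambda>z. z ^ n / complex_of_real (sqrt (M a n))) holomorphic_on disc"
    using M_pos[OF a, of n] by (intro holomorphic_intros) auto
  ultimately have hol: "e a n holomorphic_on disc" by simp
  have "L2 a (e a n)"
  proof (rule L2_bounded[OF a e_meas])
    fix z assume "z \<in> disc"
    then show "cmod (e a n z) \<le> 1 / sqrt (M a n)"
      using M_pos[OF a, of n] in_disc_le1[of z]
      by (auto simp: e_def norm_divide norm_power power_le_one divide_right_mono)
  qed
  then show ?thesis using hol by (auto simp: A2_def e_def)
qed

lemma mono_orth_aux:
  assumes "n < m"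
  shows "integral\<^sup>L lborel (\<lambda>z. W a z *\<^sub>R (z ^ m * cnj z ^ n)) = 0"
proof -
  define c where "c = exp (\<i> * complex_of_real (pi / real (m - n)))"
  have c1: "cmod c = 1" by (simp add: c_def norm_exp_eq_Re)
  have cpow: "c ^ m * cnj c ^ n = -1"
  proof -
    have "c ^ m * cnj c ^ n = c ^ (m - n) * (c * cnj c) ^ n"
      using assms by (simp add: power_mult_distrib power_add[symmetric] mult.assoc)
    also have "c * cnj c = 1" using c1 by (simp add: complex_norm_square[symmetric])
    also have "c ^ (m - n) = exp (of_nat (m - n) * (\<i> * complex_of_real (pi / real (m - n))))"
      unfolding c_def by (rule exp_of_nat_mult[symmetric])
    also have "of_nat (m - n) * (\<i> * complex_of_real (pi / real (m - n))) = \<i> * pi"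
      using assms by (simp add: field_simps)
    finally show ?thesis by simp
  qed
  define I where "I = integral\<^sup>L lborel (\<lambda>z. W a z *\<^sub>R (z ^ m * cnj z ^ n))"
  have "I = integral\<^sup>L lborel (\<lambda>z. W a (c * z) *\<^sub>R ((c * z) ^ m * cnj (c * z) ^ n))"
    unfolding I_def by (rule integral_rot[OF c1, symmetric]) measurable
  also have "\<dots> = integral\<^sup>L lborel (\<lambda>z. (c ^ m * cnj c ^ n) * (W a z *\<^sub>R (z ^ m * cnj z ^ n)))"
    by (intro Bochner_Integration.integral_cong refl) (simp add: W_rot[OF c1] W_rot[OF c1, unfolded mult.commute[of c]] power_mult_distrib algebra_simps)
  also have "\<dots> = - I" unfolding cpow I_def by simp
  finally show ?thesis unfolding I_def by simp
qed

lemma mono_orth: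
  assumes "n \<noteq> m"
  shows "integral\<^sup>L lborel (\<lambda>z. W a z *\<^sub>R (z ^ m * cnj z ^ n)) = 0"
proof (cases "n < m")
  case True then show ?thesis by (rule mono_orth_aux)
next
  case False
  then have "m < n" using assms by simp
  have "integral\<^sup>L lborel (\<lambda>z. W a z *\<^sub>R (z ^ m * cnj z ^ n)) = cnj (integral\<^sup>L lborel (\<lambda>z. W a z *\<^sub>R (z ^ n * cnj z ^ m)))"
  proof -
    have "cnj (integral\<^sup>L lborel (\<lambda>z. W a z *\<^sub>R (z ^ n * cnj z ^ m))) = integral\<^sup>L lborel (\<lambda>z. cnj (W a z *\<^sub>R (z ^ n * cnj z ^ m)))"
      by (rule Bochner_Integration.integral_cnj[symmetric])
    also have "\<dots> = integral\<^sup>L lborel (\<lambda>z. W a z *\<^sub>R (z ^ m * cnj z ^ n))"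
      by (intro Bochner_Integration.integral_cong refl) (simp add: scaleR_conv_of_real mult.commute)
    finally show ?thesis ..
  qed
  also have "\<dots> = 0" using mono_orth_aux[OF \<open>m < n\<close>] by simp
  finally show ?thesis .
qed

lemma e_orth: assumes a: "0 \<le> a" shows "l2_inner a (e a m) (e a n) = (if m = n then 1 else 0)"
proof -
  have Mm: "0 < M a m" "0 < M a n" using M_pos[OF a] by auto
  have "l2_inner a (e a m) (e a n) = integral\<^sup>L lborel (\<lambda>z. W a z *\<^sub>R (e a m z * cnj (e a n z)))"
    by (rule l2_inner_lb) auto
  also have "\<dots> = integral\<^sup>L lborel (\<lambda>z. complex_of_real (1 / (sqrt (M a m) * sqrt (M a n))) * (W a z *\<^sub>R (z ^ m * cnj z ^ n)))"
    by (intro Bochner_Integration.integral_cong refl) (auto simp: e_def W_out scaleR_conv_of_real field_simps)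
  also have "\<dots> = complex_of_real (1 / (sqrt (M a m) * sqrt (M a n))) * integral\<^sup>L lborel (\<lambda>z. W a z *\<^sub>R (z ^ m * cnj z ^ n))"
    by (rule integral_mult_right_zero)
  also have "\<dots> = (if m = n then 1 else 0)"
  proof (cases "m = n")
    case True
    have "integral\<^sup>L lborel (\<lambda>z. W a z *\<^sub>R (z ^ m * cnj z ^ n)) = integral\<^sup>L lborel (\<lambda>z. complex_of_real (W a z * (cmod z)^(2*n)))"
    proof (intro Bochner_Integration.integral_cong refl)
      fix z
      have "z ^ n * cnj z ^ n = (z * cnj z) ^ n" by (simp add: power_mult_distrib)
      also have "z * cnj z = complex_of_real ((cmod z)^2)" by (rule complex_norm_square[symmetric])
      finally show "W a z *\<^sub>R (z ^ m * cnj z ^ n) = complex_of_real (W a z * (cmod z)^(2*n))"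
        using True by (simp add: scaleR_conv_of_real power_mult)
    qed
    also have "\<dots> = complex_of_real (M a n)" unfolding M_def by (rule integral_complex_of_real)
    finally show ?thesis using True Mm by (simp add: real_sqrt_mult[symmetric])
  next
    case False
    then show ?thesis using mono_orth[of n m a] by simp
  qed
  finally show ?thesis .
qed

lemma A2_D: assumes "f \<in> A2 a"
  shows "f holomorphic_on disc" "\<And>z. z \<notin> disc \<Longrightarrow> f z = 0" "L2 a f" "f \<in> borel_measurable borel"
  using assms by (auto simp: A2_def L2_iff)

lemma e_complete:
  assumes a: "0 \<le> a" and f: "f \<in> A2 a" and orth: "\<And>n. l2_inner a f (e a n) = 0"
  shows "f z = 0"
proof -
  note fD = A2_D[OF f]
  have fm[measurable]: "f \<in> borel_measurable borel" by (rule fD(4))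
  have fi: "integrable lborel (\<lambda>z. W a z *\<^sub>R f z)" by (rule L2_L1[OF a fD(3)])
  have dz: "(deriv ^^ n) f 0 = 0" for n
  proof -
    have Mn: "0 < M a n" by (rule M_pos[OF a])
    have "0 = l2_inner a f (e a n)" using orth by simp
    also have "\<dots> = integral\<^sup>L lborel (\<lambda>z. W a z *\<^sub>R (f z * cnj (e a n z)))"
      by (rule l2_inner_lb) auto
    also have "\<dots> = integral\<^sup>L lborel (\<lambda>z. complex_of_real (1 / sqrt (M a n)) * (complex_of_real (W a z * 1) * cnj z ^ n * f z))"
      by (intro Bochner_Integration.integral_cong refl) (auto simp: e_def W_out scaleR_conv_of_real field_simps)
    also have "\<dots> = complex_of_real (1 / sqrt (M a n)) * integral\<^sup>L lborel (\<lambda>z. complex_of_real (W a z * 1) * cnj z ^ n * f z)"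
      by (rule integral_mult_right_zero)
    also have "integral\<^sup>L lborel (\<lambda>z. complex_of_real (W a z * 1) * cnj z ^ n * f z)
        = (deriv ^^ n) f 0 / fact n * complex_of_real (integral\<^sup>L lborel (\<lambda>z. W a z * 1 * (cmod z)^(2*n)))"
      by (rule K[OF a fD(1) fm fi, of "\<lambda>_. 1" 1]) auto
    also have "integral\<^sup>L lborel (\<lambda>z. W a z * 1 * (cmod z)^(2*n)) = M a n" by (simp add: M_def)
    finally have "0 = complex_of_real (1 / sqrt (M a n)) * ((deriv ^^ n) f 0 / fact n * complex_of_real (M a n))" .
    then show ?thesis using Mn by simp
  qed
  show ?thesis
  proof (cases "z \<in> disc")
    case True
    show ?thesis
      by (rule holomorphic_fun_eq_0_on_ball[of f 0 1 z]) (use fD(1) True dz in \<open>auto simp: disc_def\<close>)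
  qed (rule fD(2))
qed

lemma A2_diff: assumes "f \<in> A2 a" "g \<in> A2 a" shows "(\<lambda>z. f z - g z) \<in> A2 a"
  using assms L2_diff by (auto simp: A2_def intro: holomorphic_intros)

lemma proj_eq:
  assumes a: "0 \<le> a" and f: "L2 a f" and q: "q \<in> A2 a"
    and orth: "\<And>h. h \<in> A2 a \<Longrightarrow> l2_inner a (\<lambda>z. f z - q z) h = 0"
  shows "bergman_proj a f = q"
  unfolding bergman_proj_def
proof (rule the_equality)
  show "q \<in> A2 a \<and> (\<forall>h\<in>A2 a. l2_inner a (\<lambda>z. f z - q z) h = 0)" using q orth by auto
  fix q' assume q': "q' \<in> A2 a \<and> (\<forall>h\<in>A2 a. l2_inner a (\<lambda>z. f z - q' z) h = 0)"
  define d where "d z = q z - q' z" for z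
  have dA2: "d \<in> A2 a" unfolding d_def using A2_diff q q' by blast
  note dD = A2_D[OF dA2]
  have qL: "L2 a q" "L2 a q'" using q q' by (auto simp: A2_def)
  have fq: "L2 a (\<lambda>z. f z - q z)" "L2 a (\<lambda>z. f z - q' z)" using L2_diff f qL by auto
  have m: "f \<in> borel_measurable borel" "q \<in> borel_measurable borel" "q' \<in> borel_measurable borel" "d \<in> borel_measurable borel"
    using f qL dD(4) by (auto simp: L2_iff)
  have "0 = l2_inner a (\<lambda>z. f z - q' z) d - l2_inner a (\<lambda>z. f z - q z) d"
    using q' orth[OF dA2] dA2 by auto
  also have "\<dots> = integral\<^sup>L lborel (\<lambda>z. W a z *\<^sub>R ((f z - q' z) * cnj (d z))) - integral\<^sup>L lborel (\<lambda>z. W a z *\<^sub>R ((f z - q z) * cnj (d z)))"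
    using m by (simp add: l2_inner_lb)
  also have "\<dots> = integral\<^sup>L lborel (\<lambda>z. W a z *\<^sub>R ((f z - q' z) * cnj (d z)) - W a z *\<^sub>R ((f z - q z) * cnj (d z)))"
    by (rule Bochner_Integration.integral_diff[symmetric]) (use L2_prod_integrable fq dD(3) in auto)
  also have "\<dots> = integral\<^sup>L lborel (\<lambda>z. complex_of_real (W a z * (cmod (d z))^2))"
  proof (intro Bochner_Integration.integral_cong refl)
    fix z
    have "W a z *\<^sub>R ((f z - q' z) * cnj (d z)) - W a z *\<^sub>R ((f z - q z) * cnj (d z)) = W a z *\<^sub>R (d z * cnj (d z))"
      by (simp add: d_def algebra_simps)
    also have "d z * cnj (d z) = complex_of_real ((cmod (d z))^2)" by (rule complex_norm_square[symmetric])
    finally show "W a z *\<^sub>R ((f z - q' z) * cnj (d z)) - W a z *\<^sub>R ((f z - q z) * cnj (d z)) = complex_of_real (W a z * (cmod (d z))^2)"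
      by (simp add: scaleR_conv_of_real)
  qed
  also have "\<dots> = complex_of_real (integral\<^sup>L lborel (\<lambda>z. W a z * (cmod (d z))^2))"
    by (rule integral_complex_of_real)
  finally have "integral\<^sup>L lborel (\<lambda>z. W a z * (cmod (d z))^2) = 0" by simp
  then have "AE z in lborel. W a z * (cmod (d z))^2 = 0"
    using dD(3) by (subst (asm) integral_nonneg_eq_0_iff_AE) (auto simp: L2_iff W_nonneg)
  then have "AE z in lborel. z \<in> disc \<longrightarrow> d z = 0"
    by eventually_elim (auto dest: W_pos[of _ a])
  then have "d z = 0" if "z \<in> disc" for z
    using cont_AE_zero[OF holomorphic_on_imp_continuous_on[OF dD(1)]] that by blast
  then have "d z = 0" for z using dD(2) by (cases "z \<in> disc") auto
  then show "q' = q" by (auto simp: d_def fun_eq_iff)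
qed

definition pc :: "real \<Rightarrow> nat \<Rightarrow> real" where
  "pc a n = M a n / M a (n - 1) / sqrt (M a n)"

definition p :: "real \<Rightarrow> nat \<Rightarrow> complex \<Rightarrow> complex" where
  "p a n z = (if n = 0 then 0 else if z \<in> disc then complex_of_real (pc a n) * z ^ (n - 1) else 0)"

lemma p_meas[measurable]: "p a n \<in> borel_measurable borel"
  unfolding p_def by measurable

lemma p_A2: assumes a: "0 \<le> a" shows "p a n \<in> A2 a"
proof -
  have "p a n holomorphic_on disc \<longleftrightarrow> (\<lambda>z. if n = 0 then 0 else complex_of_real (pc a n) * z ^ (n - 1)) holomorphic_on disc"
    by (rule holomorphic_cong) (auto simp: p_def)
  moreover have "(\<lambda>z. if n = 0 then 0 else complex_of_real (pc a n) * z ^ (n - 1)) holomorphic_on disc"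
    by (cases "n = 0") (auto intro!: holomorphic_intros)
  ultimately have hol: "p a n holomorphic_on disc" by simp
  have "L2 a (p a n)"
  proof (rule L2_bounded[OF a p_meas])
    fix z assume "z \<in> disc"
    then show "cmod (p a n z) \<le> \<bar>pc a n\<bar>"
      using in_disc_le1[of z]
      by (auto simp: p_def norm_mult norm_power power_le_one mult_left_le)
  qed
  then show ?thesis using hol by (auto simp: A2_def p_def)
qed

definition fn :: "real \<Rightarrow> nat \<Rightarrow> complex \<Rightarrow> complex" where
  "fn a n w = cnj w * e a n w"

lemma fn_meas[measurable]: "fn a n \<in> borel_measurable borel"
  unfolding fn_def by measurable

lemma fn_L2: assumes a: "0 \<le> a" shows "L2 a (fn a n)"
proof (rule L2_bounded[OF a fn_meas])
  fix z assume z: "z \<in> disc"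
  have "cmod (fn a n z) = cmod z * cmod (e a n z)" by (simp add: fn_def norm_mult)
  also have "\<dots> \<le> 1 * (1 / sqrt (M a n))"
    using z M_pos[OF a, of n] in_disc_le1[of z]
    by (intro mult_mono) (auto simp: e_def norm_divide norm_power power_le_one divide_right_mono)
  finally show "cmod (fn a n z) \<le> 1 / sqrt (M a n)" by simp
qed

lemma L1_mult_z:
  assumes a: "0 \<le> a" and h: "h \<in> A2 a"
  shows "integrable lborel (\<lambda>z. W a z *\<^sub>R (z * h z))"
proof -
  note hD = A2_D[OF h]
  have [measurable]: "h \<in> borel_measurable borel" by (rule hD(4))
  show ?thesis
  proof (rule Bochner_Integration.integrable_bound[OF L2_L1[OF a hD(3)]])
    show "AE z in lborel. norm (W a z *\<^sub>R (z * h z)) \<le> norm (W a z *\<^sub>R h z)"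
    proof (intro AE_I2)
      fix z show "norm (W a z *\<^sub>R (z * h z)) \<le> norm (W a z *\<^sub>R h z)"
      proof (cases "z \<in> disc")
        case True
        have "norm (W a z *\<^sub>R (z * h z)) = W a z * (cmod z * cmod (h z))" by (simp add: W_nonneg norm_mult)
        also have "\<dots> \<le> W a z * (1 * cmod (h z))"
          using in_disc_le1[OF True] by (intro mult_left_mono mult_right_mono) (auto simp: W_nonneg)
        finally show ?thesis by (simp add: W_nonneg)
      qed (simp add: W_out)
    qed
  qed measurable
qed

lemma proj_orth:
  assumes a: "0 \<le> a" and h: "h \<in> A2 a"
  shows "l2_inner a (\<lambda>z. fn a n z - p a n z) h = 0"
proof -
  note hD = A2_D[OF h]
  have hm[measurable]: "h \<in> borel_measurable borel" by (rule hD(4))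
  have hi: "integrable lborel (\<lambda>z. W a z *\<^sub>R h z)" by (rule L2_L1[OF a hD(3)])
  have Mn: "0 < M a n" by (rule M_pos[OF a])
  have "cnj (l2_inner a (\<lambda>z. fn a n z - p a n z) h) = cnj (integral\<^sup>L lborel (\<lambda>z. W a z *\<^sub>R ((fn a n z - p a n z) * cnj (h z))))"
    by (subst l2_inner_lb) auto
  also have "\<dots> = integral\<^sup>L lborel (\<lambda>z. cnj (W a z *\<^sub>R ((fn a n z - p a n z) * cnj (h z))))"
    by (rule Bochner_Integration.integral_cnj[symmetric])
  also have "\<dots> = 0"
  proof (cases n)
    case 0
    have "integral\<^sup>L lborel (\<lambda>z. cnj (W a z *\<^sub>R ((fn a n z - p a n z) * cnj (h z))))
        = integral\<^sup>L lborel (\<lambda>z. complex_of_real (1 / sqrt (M a 0)) * (complex_of_real (W a z * 1) * cnj z ^ 0 * (z * h z)))"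
      by (intro Bochner_Integration.integral_cong refl) (auto simp: 0 fn_def p_def e_def W_out scaleR_conv_of_real field_simps)
    also have "\<dots> = complex_of_real (1 / sqrt (M a 0)) * integral\<^sup>L lborel (\<lambda>z. complex_of_real (W a z * 1) * cnj z ^ 0 * (z * h z))"
      by (rule integral_mult_right_zero)
    also have "integral\<^sup>L lborel (\<lambda>z. complex_of_real (W a z * 1) * cnj z ^ 0 * (z * h z))
        = (deriv ^^ 0) (\<lambda>z. z * h z) 0 / fact 0 * complex_of_real (integral\<^sup>L lborel (\<lambda>z. W a z * 1 * (cmod z)^(2*0)))"
      by (rule K[OF a _ _ L1_mult_z[OF a h], of "\<lambda>_. 1" 1]) (auto intro!: holomorphic_intros hD(1))
    finally show ?thesis by simp
  next
    case (Suc m)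
    define lam where "lam = M a n / M a m"
    have Mm: "0 < M a m" by (rule M_pos[OF a])
    have "integral\<^sup>L lborel (\<lambda>z. cnj (W a z *\<^sub>R ((fn a n z - p a n z) * cnj (h z))))
        = integral\<^sup>L lborel (\<lambda>z. complex_of_real (1 / sqrt (M a n)) * (complex_of_real (W a z * ((cmod z)^2 - lam)) * cnj z ^ m * h z))"
    proof (intro Bochner_Integration.integral_cong refl)
      fix z
      show "cnj (W a z *\<^sub>R ((fn a n z - p a n z) * cnj (h z))) = complex_of_real (1 / sqrt (M a n)) * (complex_of_real (W a z * ((cmod z)^2 - lam)) * cnj z ^ m * h z)"
      proof (cases "z \<in> disc")
        case True
        have zz: "z * cnj z = complex_of_real ((cmod z)^2)" by (rule complex_norm_square[symmetric])
        have sM: "sqrt (M a n) \<noteq> 0" using Mn by simp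
        have X: "fn a n z - p a n z = (cnj z * z ^ n - complex_of_real lam * z ^ m) / complex_of_real (sqrt (M a n))"
          using True Mm Mn by (simp add: fn_def p_def e_def pc_def lam_def Suc field_simps)
        have "cnj (W a z *\<^sub>R ((fn a n z - p a n z) * cnj (h z)))
            = complex_of_real (W a z) * ((z * cnj z ^ n - complex_of_real lam * cnj z ^ m) / complex_of_real (sqrt (M a n))) * h z"
          unfolding X by (simp add: scaleR_conv_of_real)
        also have "z * cnj z ^ n = cnj z ^ m * (z * cnj z)" by (simp add: Suc)
        also note zz
        finally show ?thesis using sM by (simp add: field_simps)
      qed (simp add: W_out)
    qed
    also have "\<dots> = complex_of_real (1 / sqrt (M a n)) * integral\<^sup>L lborel (\<lambda>z. complex_of_real (W a z * ((cmod z)^2 - lam)) * cnj z ^ m * h z)"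
      by (rule integral_mult_right_zero)
    also have "integral\<^sup>L lborel (\<lambda>z. complex_of_real (W a z * ((cmod z)^2 - lam)) * cnj z ^ m * h z)
        = (deriv ^^ m) h 0 / fact m * complex_of_real (integral\<^sup>L lborel (\<lambda>z. W a z * ((cmod z)^2 - lam) * (cmod z)^(2*m)))"
    proof (rule K[OF a hD(1) hm hi, of "\<lambda>r. r^2 - lam" "1 + \<bar>lam\<bar>"])
      show "(\<lambda>r. r^2 - lam) \<in> borel_measurable borel" by measurable
      fix r :: real assume "0 \<le> r" "r < 1"
      then have "r^2 \<le> 1" by (simp add: power_le_one)
      then show "\<bar>r^2 - lam\<bar> \<le> 1 + \<bar>lam\<bar>" using zero_le_power2[of r] by linarith
    qed
    also have "integral\<^sup>L lborel (\<lambda>z. W a z * ((cmod z)^2 - lam) * (cmod z)^(2*m)) = 0"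
    proof -
      have "integral\<^sup>L lborel (\<lambda>z. W a z * ((cmod z)^2 - lam) * (cmod z)^(2*m))
          = integral\<^sup>L lborel (\<lambda>z. W a z * (cmod z)^(2*n) - lam * (W a z * (cmod z)^(2*m)))"
        by (intro Bochner_Integration.integral_cong refl) (simp add: Suc algebra_simps power_add power_mult_distrib power2_eq_square)
      also have "\<dots> = M a n - lam * M a m"
        unfolding M_def using M_int[OF a]
        by (subst Bochner_Integration.integral_diff) auto
      also have "\<dots> = 0" using Mm by (simp add: lam_def)
      finally show ?thesis .
    qed
    finally show ?thesis by simp
  qed
  finally show ?thesis by simp
qed

lemma proj_fn: assumes a: "0 \<le> a" shows "bergman_proj a (fn a n) = p a n"
  by (rule proj_eq[OF a fn_L2[OF a] p_A2[OF a] proj_orth[OF a]])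

lemma poly_id: "(x::real)^(2*m) * (x^2 - l)^2 = x^(2*Suc (Suc m)) - 2*l*x^(2*Suc m) + l^2 * x^(2*m)"
proof -
  have e1: "2*Suc (Suc m) = 2*m + 2*2" by simp
  have A: "x^(2*Suc (Suc m)) = x^(2*m) * (x^2)^2" unfolding e1 by (metis power_add power_mult)
  have e2: "2*Suc m = 2*m + 2" by simp
  have B: "x^(2*Suc m) = x^(2*m) * x^2" unfolding e2 by (metis power_add)
  have g: "\<And>y u. (y::real) * (u - l)^2 = y * u^2 - 2*l*(y*u) + l^2*y" by (simp add: power2_diff algebra_simps)
  show ?thesis by (subst A, subst B, rule g)
qed

lemma lin3:
  fixes A B C :: "'a \<Rightarrow> real"
  assumes "integrable N A" "integrable N B" "integrable N C"
  shows "integral\<^sup>L N (\<lambda>z. c * ((A z - d * B z) + g * C z)) = c * ((integral\<^sup>L N A - d * integral\<^sup>L N B) + g * integral\<^sup>L N C)"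
  using assms by (simp add: Bochner_Integration.integral_add Bochner_Integration.integral_diff)

definition rr :: "real \<Rightarrow> nat \<Rightarrow> real" where
  "rr a n = (if n = 0 then 0 else M a n / M a (n - 1))"

lemma fn_p_disc:
  assumes a: "0 \<le> a" and z: "z \<in> disc"
  shows "fn a (Suc m) z - p a (Suc m) z
     = z ^ m * complex_of_real ((cmod z)^2 - M a (Suc m) / M a m) / complex_of_real (sqrt (M a (Suc m)))"
proof -
  have Mm: "0 < M a m" "0 < M a (Suc m)" using M_pos[OF a] by auto
  have zz: "cnj z * z = complex_of_real ((cmod z)^2)" using complex_norm_square[of z] by (simp add: mult.commute)
  have "fn a (Suc m) z - p a (Suc m) z = (z ^ m * (cnj z * z) - complex_of_real (M a (Suc m) / M a m) * z ^ m) / complex_of_real (sqrt (M a (Suc m)))"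
    using z Mm by (simp add: fn_def p_def e_def pc_def field_simps)
  also note zz
  finally show ?thesis by (simp add: algebra_simps)
qed

lemma norm_S:
  assumes a: "0 \<le> a"
  shows "(l2_norm a (\<lambda>z. fn a n z - p a n z))^2 = rr a (Suc n) - rr a n"
proof -
  have Mp: "\<And>k. 0 < M a k" using M_pos[OF a] by auto
  have "(l2_norm a (\<lambda>z. fn a n z - p a n z))^2 = integral\<^sup>L lborel (\<lambda>z. W a z * (cmod (fn a n z - p a n z))^2)"
    by (rule l2_norm_lb) measurable
  also have "\<dots> = rr a (Suc n) - rr a n"
  proof (cases n)
    case 0
    have "integral\<^sup>L lborel (\<lambda>z. W a z * (cmod (fn a n z - p a n z))^2) = integral\<^sup>L lborel (\<lambda>z. (1 / M a 0) * (W a z * (cmod z)^(2*1)))"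
    proof (intro Bochner_Integration.integral_cong refl)
      fix z show "W a z * (cmod (fn a n z - p a n z))^2 = (1 / M a 0) * (W a z * (cmod z)^(2*1))"
        using Mp[of 0] by (cases "z \<in> disc") (auto simp: 0 fn_def p_def e_def W_out norm_mult norm_divide power_divide power_mult_distrib)
    qed
    also have "\<dots> = (1 / M a 0) * M a 1" unfolding M_def by (rule integral_mult_right_zero)
    finally show ?thesis by (simp add: 0 rr_def)
  next
    case (Suc m)
    define lam where "lam = M a (Suc m) / M a m"
    have "integral\<^sup>L lborel (\<lambda>z. W a z * (cmod (fn a n z - p a n z))^2)
       = integral\<^sup>L lborel (\<lambda>z. (1 / M a n) * ((W a z * (cmod z)^(2*Suc (Suc m)) - 2 * lam * (W a z * (cmod z)^(2*Suc m))) + lam^2 * (W a z * (cmod z)^(2*m))))"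
    proof (intro Bochner_Integration.integral_cong refl)
      fix z show "W a z * (cmod (fn a n z - p a n z))^2 = (1 / M a n) * ((W a z * (cmod z)^(2*Suc (Suc m)) - 2 * lam * (W a z * (cmod z)^(2*Suc m))) + lam^2 * (W a z * (cmod z)^(2*m)))"
      proof (cases "z \<in> disc")
        case True
        have "(cmod (fn a n z - p a n z))^2 = (cmod z)^(2*m) * ((cmod z)^2 - lam)^2 / M a n"
          using Mp[of n] unfolding Suc fn_p_disc[OF a True] lam_def[symmetric]
          by (simp add: norm_mult norm_divide norm_power norm_of_real power2_abs power_divide power_mult_distrib power_mult[symmetric] mult.commute del: of_real_diff of_real_power)
        also have "(cmod z)^(2*m) * ((cmod z)^2 - lam)^2 = (cmod z)^(2*Suc (Suc m)) - 2*lam*(cmod z)^(2*Suc m) + lam^2 * (cmod z)^(2*m)"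
          by (rule poly_id)
        finally show ?thesis by (simp add: field_simps)
      qed (simp add: W_out)
    qed
    also have "\<dots> = (1 / M a n) * ((M a (Suc (Suc m)) - 2 * lam * M a (Suc m)) + lam^2 * M a m)"
      unfolding M_def by (rule lin3[OF M_int[OF a] M_int[OF a] M_int[OF a]])
    also have "\<dots> = rr a (Suc n) - rr a n"
      using Mp[of m] Mp[of "Suc m"] by (simp add: rr_def Suc lam_def field_simps power2_eq_square)
    finally show ?thesis .
  qed
  finally show ?thesis .
qed

lemma S_eq: assumes a: "0 \<le> a" shows "canonical_solution a (e a n) = (\<lambda>z. fn a n z - p a n z)"
proof -
  have "(\<lambda>w. cnj w * e a n w) = fn a n" by (simp add: fn_def fun_eq_iff)
  then show ?thesis unfolding canonical_solution_def using proj_fn[OF a, of n] by (simp add: fn_def)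
qed

lemma rr_le1: assumes a: "0 \<le> a" shows "rr a n \<le> 1"
proof (cases n)
  case (Suc m)
  then show ?thesis using M_mono[OF a, of m] M_pos[OF a, of m] by (simp add: rr_def)
qed (simp add: rr_def)

theorem mainTheorem2:
  fixes \<alpha> :: real
  assumes "\<alpha> \<ge> 0"
  shows "hilbert_schmidt_on_A2 \<alpha> (canonical_solution \<alpha>)"
proof -
  have a: "0 \<le> \<alpha>" using assms by simp
  have onb: "orthonormal_basis_A2 \<alpha> (e \<alpha>)"
    unfolding orthonormal_basis_A2_def
    using e_A2[OF a] e_orth[OF a] e_complete[OF a] by blast
  have L: "L2 \<alpha> (canonical_solution \<alpha> (e \<alpha> n))" for n
    unfolding S_eq[OF a] by (rule L2_diff[OF fn_L2[OF a] A2_D(3)[OF p_A2[OF a]]])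
  have nsq: "(l2_norm \<alpha> (canonical_solution \<alpha> (e \<alpha> n)))^2 = rr \<alpha> (Suc n) - rr \<alpha> n" for n
    unfolding S_eq[OF a] by (rule norm_S[OF a])
  have "summable (\<lambda>n. (l2_norm \<alpha> (canonical_solution \<alpha> (e \<alpha> n)))^2)"
  proof (rule summableI_nonneg_bounded)
    show "0 \<le> (l2_norm \<alpha> (canonical_solution \<alpha> (e \<alpha> n)))^2" for n by simp
    show "(\<Sum>i<n. (l2_norm \<alpha> (canonical_solution \<alpha> (e \<alpha> i)))^2) \<le> 1" for n
      unfolding nsq sum_lessThan_telescope using rr_le1[OF a, of n] by (simp add: rr_def)
  qed
  then show ?thesis unfolding hilbert_schmidt_on_A2_def using onb L by blast
qed

end
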